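(* Let $0<q<1$ and let $T$ be an optimal tree for $\mathrm{TDGD}(q)$. For every $s\ge 0$, the leaves of $T$ corresponding to symbols of signature $s$ all lie at depths $d$ with $d\in\{d_0,d_0+1\}$ for some $d_0$; i.e., they occupy at most two consecutive levels of $T$.
   Context: $\mathcal{A}=\{(i,j): i,j\in\mathbb{Z}_{\ge 0}\}$; $\mathrm{TDGD}(q)$ is the distribution $P(i,j)=(1-q)^2q^{i+j}$ on $\mathcal{A}$. A prefix code for $\mathcal{A}$ is a full binary tree whose leaves are in bijection with $\mathcal{A}$; codeword length = depth of leaf; a tree is optimal for $\mathrm{TDGD}(q)$ if it minimizes expected codeword length. The signature of $(i,j)$ is $s=i+j$; a level of a tree is the set of nodes at a given depth. *)

theory Defs
  imports "HOL-Analysis.Analysis"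
begin

text \<open>Binary trees are represented as sets of nodes, each node being the bool list
  of the path from the root.\<close>

definition full_tree :: "bool list set \<Rightarrow> bool" where
  "full_tree T \<longleftrightarrow> [] \<in> T \<and>
     (\<forall>x y. x @ y \<in> T \<longrightarrow> x \<in> T) \<and>
     (\<forall>x\<in>T. (x @ [True] \<in> T) = (x @ [False] \<in> T))"

definition leaves :: "bool list set \<Rightarrow> bool list set" where
  "leaves T = {x \<in> T. x @ [True] \<notin> T \<and> x @ [False] \<notin> T}"

definition prefix_code :: "bool list set \<Rightarrow> (nat \<times> nat \<Rightarrow> bool list) \<Rightarrow> bool" where
  "prefix_code T f \<longleftrightarrow> full_tree T \<and> bij_betw f UNIV (leaves T)"

definition tdgd :: "real \<Rightarrow> nat \<times> nat \<Rightarrow> real" where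
  "tdgd q = (\<lambda>(i, j). (1 - q)^2 * q ^ (i + j))"

definition exp_len :: "real \<Rightarrow> (nat \<times> nat \<Rightarrow> bool list) \<Rightarrow> ennreal" where
  "exp_len q f = (\<Sum>\<^sub>\<infinity> a. ennreal (tdgd q a * real (length (f a))))"

definition optimal :: "real \<Rightarrow> bool list set \<Rightarrow> (nat \<times> nat \<Rightarrow> bool list) \<Rightarrow> bool" where
  "optimal q T f \<longleftrightarrow> prefix_code T f \<and>
     (\<forall>T' f'. prefix_code T' f' \<longrightarrow> exp_len q f \<le> exp_len q f')"

end

theory Submission
  imports Defs
begin


definition unary :: "nat \<Rightarrow> bool list" where "unary n = replicate n True @ [False]"
definition gcode :: "nat \<times> nat \<Rightarrow> bool list" where "gcode = (\<lambda>(i,j). unary i @ unary j)"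
definition T0 :: "bool list set" where
  "T0 = {v. \<exists>k. v = replicate k True} \<union> {v. \<exists>i k. v = unary i @ replicate k True} \<union> range gcode"

abbreviation nf :: "bool list \<Rightarrow> nat" where "nf v \<equiv> length (filter Not v)"

lemma nf_unary[simp]: "nf (unary i) = 1" by (simp add: unary_def)
lemma nf_rep[simp]: "nf (replicate k True) = 0" by (induct k) auto
lemma nf_g[simp]: "nf (gcode c) = 2" by (cases c) (simp add: gcode_def)

lemma unary_app_inj: "unary i @ xs = unary i' @ ys \<Longrightarrow> i = i' \<and> xs = ys"
proof (induct i arbitrary: i')
  case 0 then show ?case by (cases i') (auto simp: unary_def)
next
  case (Suc i) then show ?case by (cases i') (auto simp: unary_def)
qed

lemma inj_gcode: "inj gcode"
proof (rule injI)
  fix x y assume "gcode x = gcode y"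
  then obtain i j i' j' where xy: "x = (i,j)" "y = (i',j')" "unary i @ unary j = unary i' @ unary j'"
    unfolding gcode_def by (cases x, cases y) auto
  then have "i = i'" "unary j = unary j'" using unary_app_inj by blast+
  moreover have "j = j'" using unary_app_inj[of j "[]" j' "[]"] \<open>unary j = unary j'\<close> by simp
  ultimately show "x = y" using xy by simp
qed

lemma last_g: "last (gcode c) = False" by (cases c) (simp add: gcode_def unary_def)

lemma T0_step: "v @ [c] \<in> T0 \<Longrightarrow> v \<in> T0"
proof -
  assume "v @ [c] \<in> T0"
  then consider (a) k where "v @ [c] = replicate k True"
    | (b) i k where "v @ [c] = unary i @ replicate k True"
    | (c) i j where "v @ [c] = unary i @ unary j"
    unfolding T0_def gcode_def by auto
  then show "v \<in> T0"
  proof cases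
    case (a k)
    then show ?thesis
      by (cases k) (auto simp: T0_def replicate_append_same[symmetric] simp del: replicate_append_same)
  next
    case (b i k)
    then show ?thesis
    proof (cases k)
      case 0 then show ?thesis using b by (auto simp: T0_def unary_def)
    next
      case (Suc k') then show ?thesis using b
        by (auto simp: T0_def replicate_append_same[symmetric] simp del: replicate_append_same)
    qed
  next
    case (c i j)
    then have "v = unary i @ replicate j True" by (simp add: unary_def)
    then show ?thesis by (auto simp: T0_def)
  qed
qed

lemma T0_prefix: "v @ y \<in> T0 \<Longrightarrow> v \<in> T0"
proof (induct y rule: rev_induct)
  case Nil then show ?case by simp
next
  case (snoc c y) then show ?case using T0_step[of "v @ y" c] by simp
qed

lemma g_no_child: "gcode c @ [b] \<notin> T0"
proof
  assume "gcode c @ [b] \<in> T0"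
  have n0: "nf (replicate k True) \<noteq> nf (gcode c @ [b])" for k by simp
  have n1: "nf (unary i @ replicate k True) \<noteq> nf (gcode c @ [b])" for i k by simp
  have "gcode c @ [b] \<in> range gcode"
    using \<open>gcode c @ [b] \<in> T0\<close> unfolding T0_def
  proof (elim UnE CollectE exE)
    fix k assume "gcode c @ [b] = replicate k True" then show ?thesis using n0[of k] by simp
  next
    fix i k assume "gcode c @ [b] = unary i @ replicate k True" then show ?thesis using n1[of i k] by simp
  qed
  then obtain c' where e: "gcode c @ [b] = gcode c'" by blast
  have "nf (gcode c @ [b]) = 2" "last (gcode c @ [b]) = False"
    by (simp only: e nf_g, simp only: e last_g)
  then show False by (cases b) auto
qed

lemma T0_cases:
  assumes "v \<in> T0"
  shows "(v @ [True] \<in> T0 \<and> v @ [False] \<in> T0) \<or> (v \<in> range gcode)"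
proof -
  have "(\<exists>k. v = replicate k True) \<or> (\<exists>i k. v = unary i @ replicate k True) \<or> v \<in> range gcode"
    using assms unfolding T0_def by blast
  then show ?thesis
proof (elim disjE exE)
  fix k assume "v = replicate k True"
  then have "v @ [True] = replicate (Suc k) True" "v @ [False] = unary k @ replicate 0 True"
    by (simp_all add: unary_def replicate_append_same[symmetric] del: replicate_append_same)
  then show ?thesis unfolding T0_def by blast
next
  fix i k assume "v = unary i @ replicate k True"
  then have "v @ [True] = unary i @ replicate (Suc k) True" "v @ [False] = gcode (i, k)"
    by (simp_all add: gcode_def unary_def replicate_append_same[symmetric] del: replicate_append_same)
  then show ?thesis unfolding T0_def by blast
qed auto
qed

lemma full_T0: "full_tree T0"
  unfolding full_tree_def
proof (intro conjI allI impI ballI)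
  show "[] \<in> T0" unfolding T0_def by (auto intro: exI[of _ 0])
  show "x @ y \<in> T0 \<Longrightarrow> x \<in> T0" for x y by (rule T0_prefix)
  show "(x @ [True] \<in> T0) = (x @ [False] \<in> T0)" if "x \<in> T0" for x
    using T0_cases[OF that] g_no_child by blast
qed

lemma g_in_T0: "gcode c \<in> T0" unfolding T0_def by auto

lemma leaves_T0: "leaves T0 = range gcode"
  unfolding leaves_def using T0_cases g_no_child g_in_T0 by blast

lemma prefix_code_g: "prefix_code T0 gcode"
  unfolding prefix_code_def using full_T0 leaves_T0 inj_gcode by (simp add: bij_betw_def)

lemma len_g: "length (gcode (i,j)) = i + j + 2" by (simp add: gcode_def unary_def)

lemma summable_Suc_pow:
  fixes q :: real assumes "0 \<le> q" "q < 1"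
  shows "summable (\<lambda>n. real (Suc n) * q ^ n)"
proof -
  have "summable (\<lambda>n. diffs (\<lambda>_. 1::real) n * q ^ n)"
    by (rule termdiff_converges[where K=1]) (use assms in auto)
  then show ?thesis by (simp add: diffs_def)
qed

lemma prod_summable_on:
  fixes a b :: "nat \<Rightarrow> real"
  assumes "a summable_on UNIV" "b summable_on UNIV" "\<And>i. a i \<ge> 0" "\<And>j. b j \<ge> 0"
  shows "(\<lambda>(i,j). a i * b j) summable_on UNIV"
proof -
  have "(\<lambda>(i,j). a i * b j) summable_on Sigma UNIV (\<lambda>_. UNIV)"
  proof (rule summable_on_SigmaI[where g="\<lambda>i. a i * infsum b UNIV"])
    show "((\<lambda>y. case (x, y) of (i, j) \<Rightarrow> a i * b j) has_sum a x * infsum b UNIV) UNIV" for x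
      using has_sum_cmult_right[OF has_sum_infsum[OF assms(2)], of "a x"] by simp
    show "(\<lambda>i. a i * infsum b UNIV) summable_on UNIV"
      by (rule summable_on_cmult_left[OF assms(1)])
  qed (use assms in auto)
  then show ?thesis by simp
qed

lemma ennreal_infsum_real:
  fixes f :: "'a \<Rightarrow> real"
  assumes summable: "f summable_on A" and fnn: "\<And>x. x\<in>A \<Longrightarrow> f x \<ge> 0"
  shows "(\<Sum>\<^sub>\<infinity>x\<in>A. ennreal (f x)) = ennreal (infsum f A)"
proof -
  have "infsum (ennreal \<circ> f) A = ennreal (infsum f A)"
  proof (rule infsum_comm_additive_general[OF _ _ summable])
    show "sum (ennreal \<circ> f) F = ennreal (sum f F)" if "finite F" "F \<subseteq> A" for F
      using that fnn by (metis (mono_tags, lifting) comp_def subsetD sum.cong sum_ennreal)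
  qed (use continuous_on_ennreal[OF continuous_on_id, of UNIV] in \<open>simp add: continuous_on_eq_continuous_at\<close>)
  then show ?thesis by (simp add: comp_def)
qed

lemma exp_len_g_finite:
  fixes q :: real assumes q: "0 < q" "q < 1"
  shows "exp_len q gcode < \<infinity>"
proof -
  define a1 where "a1 = (\<lambda>i. (1-q)^2 * (real (Suc i) * q ^ i))"
  define b1 where "b1 = (\<lambda>j::nat. q ^ j)"
  define a2 where "a2 = (\<lambda>i::nat. (1-q)^2 * q ^ i)"
  define b2 where "b2 = (\<lambda>j. real (Suc j) * q ^ j)"
  have sg: "summable (\<lambda>n::nat. q ^ n)" using q by (simp add: summable_geometric)
  have s1: "a1 summable_on UNIV" unfolding a1_def
    by (rule summable_nonneg_imp_summable_on, rule summable_mult, rule summable_Suc_pow) (use q in auto)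
  have s2: "b1 summable_on UNIV" unfolding b1_def
    by (rule summable_nonneg_imp_summable_on[OF sg]) (use q in auto)
  have s3: "a2 summable_on UNIV" unfolding a2_def
    by (rule summable_nonneg_imp_summable_on, rule summable_mult[OF sg]) (use q in auto)
  have s4: "b2 summable_on UNIV" unfolding b2_def
    by (rule summable_nonneg_imp_summable_on, rule summable_Suc_pow) (use q in auto)
  have p1: "(\<lambda>(i,j). a1 i * b1 j) summable_on UNIV"
    by (rule prod_summable_on[OF s1 s2]) (use q in \<open>auto simp: a1_def b1_def\<close>)
  have p2: "(\<lambda>(i,j). a2 i * b2 j) summable_on UNIV"
    by (rule prod_summable_on[OF s3 s4]) (use q in \<open>auto simp: a2_def b2_def\<close>)
  define \<phi> where "\<phi> = (\<lambda>c. tdgd q c * real (length (gcode c)))"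
  have phi_eq: "\<phi> = (\<lambda>c. (\<lambda>(i,j). a1 i * b1 j) c + (\<lambda>(i,j). a2 i * b2 j) c)"
  proof
    fix c :: "nat \<times> nat"
    obtain i j where c: "c = (i,j)" by (cases c)
    show "\<phi> c = (\<lambda>(i,j). a1 i * b1 j) c + (\<lambda>(i,j). a2 i * b2 j) c"
      unfolding c \<phi>_def a1_def b1_def a2_def b2_def tdgd_def len_g
      by (simp add: power_add algebra_simps)
  qed
  have "\<phi> summable_on UNIV" unfolding phi_eq by (rule summable_on_add[OF p1 p2])
  moreover have "\<And>c. \<phi> c \<ge> 0" using q unfolding \<phi>_def tdgd_def by (auto split: prod.splits)
  ultimately have "exp_len q gcode = ennreal (infsum \<phi> UNIV)"
    unfolding exp_len_def using ennreal_infsum_real[of \<phi> UNIV] by (simp add: \<phi>_def)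
  then show ?thesis by simp
qed



lemma ft_closed: "full_tree T \<Longrightarrow> x @ y \<in> T \<Longrightarrow> x \<in> T"
  unfolding full_tree_def by blast
lemma ft_root: "full_tree T \<Longrightarrow> [] \<in> T"
  unfolding full_tree_def by blast
lemma ft_child: "full_tree T \<Longrightarrow> x \<in> T \<Longrightarrow> (x @ [True] \<in> T) = (x @ [False] \<in> T)"
  unfolding full_tree_def by blast
lemma ft_sib: "full_tree T \<Longrightarrow> x @ [c] \<in> T \<Longrightarrow> x @ [\<not> c] \<in> T"
  using ft_child[of T x] ft_closed[of T x "[c]"] by (cases c) auto
lemma leaf_ext: "full_tree T \<Longrightarrow> u \<in> leaves T \<Longrightarrow> u @ y \<in> T \<Longrightarrow> y = []"
proof (cases y)
  case (Cons d y')
  assume "full_tree T" "u \<in> leaves T" "u @ y \<in> T"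
  then have "u @ [d] \<in> T" using ft_closed[of T "u @ [d]" y'] Cons by simp
  then show ?thesis using \<open>u \<in> leaves T\<close> by (cases d) (auto simp: leaves_def)
qed simp

definition collapse :: "bool list \<Rightarrow> bool \<Rightarrow> bool list set \<Rightarrow> bool list set" where
  "collapse w x T = {v \<in> T. \<not> (\<exists>r. v = w @ r)} \<union> {w @ r |r. w @ [\<not> x] @ r \<in> T}"

definition hmap :: "bool list \<Rightarrow> bool \<Rightarrow> bool list \<Rightarrow> bool list" where
  "hmap w x v = (if \<exists>r. v = w @ [\<not> x] @ r then w @ drop (Suc (length w)) v else v)"

lemma hmap_in: "hmap w x (w @ [\<not> x] @ r) = w @ r" by (auto simp: hmap_def)
lemma hmap_out: "\<not> (\<exists>r. v = w @ [\<not> x] @ r) \<Longrightarrow> hmap w x v = v" by (auto simp: hmap_def)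
lemma hmap_len: "length (hmap w x v) \<le> length v" by (auto simp: hmap_def)

lemma M1: "\<not> (\<exists>r. v = w @ r) \<Longrightarrow> (v \<in> collapse w x T) = (v \<in> T)"
  unfolding collapse_def by auto
lemma M2: "(w @ r \<in> collapse w x T) = (w @ [\<not> x] @ r \<in> T)"
  unfolding collapse_def by auto

lemma P1: "\<not> (\<exists>r. v = w @ r) \<Longrightarrow> v @ [c] = w @ r' \<Longrightarrow> r' = [] \<and> v @ [c] = w"
  by (cases r' rule: rev_cases) auto

lemma P2: "\<not> (\<exists>r. v = w @ r) \<Longrightarrow> v @ y = w @ r' \<Longrightarrow> \<exists>us. w = v @ us"
  by (auto simp: append_eq_append_conv2)

lemma collapse_full:
  assumes ft: "full_tree T" and wx: "w @ [x] \<in> T"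
  shows "full_tree (collapse w x T)"
proof -
  have wT: "w \<in> T" using ft_closed[OF ft wx] .
  have sib: "w @ [\<not> x] \<in> T" using ft_sib[OF ft wx] .
  have wC: "w \<in> collapse w x T" using M2[of w "[]" x T] sib by simp
  show ?thesis unfolding full_tree_def
  proof (intro conjI allI impI ballI)
    show "[] \<in> collapse w x T"
    proof (cases "w = []")
      case True then show ?thesis using wC by simp
    next
      case False then show ?thesis using M1[of "[]" w x T] ft_root[OF ft] by auto
    qed
  next
    fix v y assume vy: "v @ y \<in> collapse w x T"
    show "v \<in> collapse w x T"
    proof (cases "\<exists>r. v = w @ r")
      case True
      then obtain r where v: "v = w @ r" by blast
      then have "w @ [\<not> x] @ r @ y \<in> T" using vy M2[of w "r @ y" x T] by simp
      then have "w @ [\<not> x] @ r \<in> T" using ft_closed[OF ft, of "w @ [\<not> x] @ r" y] by simp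
      then show ?thesis using M2 v by simp
    next
      case False
      show ?thesis
      proof (cases "\<exists>r. v @ y = w @ r")
        case True
        then obtain us where "w = v @ us" using P2[OF False] by blast
        then have "v \<in> T" using ft_closed[OF ft] wT by blast
        then show ?thesis using M1[OF False] by simp
      next
        case False2: False
        then have "v @ y \<in> T" using vy M1[OF False2] by simp
        then show ?thesis using M1[OF False] ft_closed[OF ft] by blast
      qed
    qed
  next
    fix v assume vC: "v \<in> collapse w x T"
    show "(v @ [True] \<in> collapse w x T) = (v @ [False] \<in> collapse w x T)"
    proof (cases "\<exists>r. v = w @ r")
      case True
      then obtain r where v: "v = w @ r" by blast
      have "w @ [\<not> x] @ r \<in> T" using vC M2 v by simp
      then show ?thesis using ft_child[OF ft, of "w @ [\<not> x] @ r"] M2[of w "r @ [_]" x T] v by simp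
    next
      case False
      have vT: "v \<in> T" using vC M1[OF False] by simp
      show ?thesis
      proof (cases "\<exists>c. v @ [c] = w")
        case True
        then obtain c where c: "v @ [c] = w" by blast
        have "v @ [\<not> c] \<in> T" using ft_sib[OF ft] wT c by blast
        moreover have "\<not> (\<exists>r. v @ [\<not> c] = w @ r)"
        proof
          assume "\<exists>r. v @ [\<not> c] = w @ r"
          then obtain r where "v @ [\<not> c] = w @ r" by blast
          then have "v @ [\<not> c] = w" using P1[OF False] by blast
          then show False using c by (metis append1_eq_conv)
        qed
        ultimately have "v @ [\<not> c] \<in> collapse w x T" using M1 by blast
        moreover have "v @ [c] \<in> collapse w x T" using c wC by simp
        ultimately show ?thesis by (cases c) auto
      next
        case False3: False
        have nb: "\<not> (\<exists>r. v @ [c] = w @ r)" for c using P1[OF False] False3 by blast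
        show ?thesis using M1[OF nb[of True]] M1[OF nb[of False]] ft_child[OF ft vT] by simp
      qed
    qed
  qed
qed

lemma L1:
  assumes ft: "full_tree T" and wx: "w @ [x] \<in> T" and nw: "\<not> (\<exists>r. v = w @ r)"
  shows "(v \<in> leaves (collapse w x T)) = (v \<in> leaves T)"
proof (cases "\<exists>c. v @ [c] = w")
  case True
  then obtain c where c: "v @ [c] = w" by blast
  have wT: "w \<in> T" using ft_closed[OF ft wx] .
  have wC: "w \<in> collapse w x T" using M2[of w "[]" x T] ft_sib[OF ft wx] by simp
  have "v \<notin> leaves T" using wT c unfolding leaves_def by (cases c) auto
  moreover have "v \<notin> leaves (collapse w x T)" using wC c unfolding leaves_def by (cases c) auto
  ultimately show ?thesis by simp
next
  case False
  have nb: "\<not> (\<exists>r. v @ [c] = w @ r)" for c using P1[OF nw] False by blast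
  show ?thesis unfolding leaves_def using M1[OF nb[of True]] M1[OF nb[of False]] M1[OF nw] by simp
qed

lemma L2: "(w @ r \<in> leaves (collapse w x T)) = (w @ [\<not> x] @ r \<in> leaves T)"
  unfolding leaves_def using M2[of w r x T] M2[of w "r @ [True]" x T] M2[of w "r @ [False]" x T] by simp

lemma collapse_bij:
  assumes ft: "full_tree T" and wx: "w @ [x] \<in> T" and bij: "bij_betw f S (leaves T)"
  shows "bij_betw (hmap w x \<circ> f) (S - {c \<in> S. \<exists>r. f c = w @ [x] @ r}) (leaves (collapse w x T))"
proof (rule bij_betw_trans)
  define X where "X = {v. \<exists>r. v = w @ [x] @ r}"
  show "bij_betw f (S - {c \<in> S. \<exists>r. f c = w @ [x] @ r}) (leaves T - X)"
    using bij unfolding bij_betw_def X_def by (auto intro: inj_on_subset)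
  have wnl: "w \<notin> leaves T" using wx unfolding leaves_def by (cases x) auto
  have key: "\<not> (\<exists>r. v = w @ r)" if "v \<in> leaves T - X" "\<not> (\<exists>r. v = w @ [\<not> x] @ r)" for v
  proof
    assume "\<exists>r. v = w @ r"
    then obtain r where v: "v = w @ r" by blast
    show False
    proof (cases r)
      case Nil then show ?thesis using that wnl v by simp
    next
      case (Cons d r') then show ?thesis using that v unfolding X_def by (cases "d = x") auto
    qed
  qed
  show "bij_betw (hmap w x) (leaves T - X) (leaves (collapse w x T))"
    unfolding bij_betw_def
  proof (intro conjI)
    show "inj_on (hmap w x) (leaves T - X)"
    proof (rule inj_onI)
      fix u v assume u: "u \<in> leaves T - X" and v: "v \<in> leaves T - X" and e: "hmap w x u = hmap w x v"
      show "u = v"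
      proof (cases "\<exists>r. u = w @ [\<not> x] @ r"; cases "\<exists>r. v = w @ [\<not> x] @ r")
        assume "\<exists>r. u = w @ [\<not> x] @ r" "\<exists>r. v = w @ [\<not> x] @ r"
        then show ?thesis using e hmap_in by auto
      next
        assume a: "\<exists>r. u = w @ [\<not> x] @ r" "\<not> (\<exists>r. v = w @ [\<not> x] @ r)"
        then obtain r where "u = w @ [\<not> x] @ r" by blast
        then have "v = w @ r" using e hmap_out[OF a(2)] hmap_in by simp
        then show ?thesis using key[OF v a(2)] by blast
      next
        assume a: "\<not> (\<exists>r. u = w @ [\<not> x] @ r)" "\<exists>r. v = w @ [\<not> x] @ r"
        then obtain r where "v = w @ [\<not> x] @ r" by blast
        then have "u = w @ r" using e hmap_out[OF a(1)] hmap_in by simp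
        then show ?thesis using key[OF u a(1)] by blast
      next
        assume a: "\<not> (\<exists>r. u = w @ [\<not> x] @ r)" "\<not> (\<exists>r. v = w @ [\<not> x] @ r)"
        then show ?thesis using e hmap_out by metis
      qed
    qed
    show "hmap w x ` (leaves T - X) = leaves (collapse w x T)"
    proof (intro equalityI subsetI)
      fix y assume "y \<in> hmap w x ` (leaves T - X)"
      then obtain v where v: "v \<in> leaves T - X" and y: "y = hmap w x v" by blast
      show "y \<in> leaves (collapse w x T)"
      proof (cases "\<exists>r. v = w @ [\<not> x] @ r")
        case True
        then obtain r where "v = w @ [\<not> x] @ r" by blast
        then show ?thesis using y v L2 hmap_in by simp
      next
        case False
        then show ?thesis using y v L1[OF ft wx key[OF v False]] hmap_out by simp
      qed
    next
      fix y assume y: "y \<in> leaves (collapse w x T)"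
      show "y \<in> hmap w x ` (leaves T - X)"
      proof (cases "\<exists>r. y = w @ r")
        case True
        then obtain r where r: "y = w @ r" by blast
        then have "w @ [\<not> x] @ r \<in> leaves T - X" using y L2 unfolding X_def by auto
        then show ?thesis using hmap_in r by (metis image_eqI)
      next
        case False
        then have "y \<in> leaves T - X" using y L1[OF ft wx False] unfolding X_def by auto
        moreover have "hmap w x y = y" using False by (intro hmap_out) auto
        ultimately show ?thesis by (metis image_eqI)
      qed
    qed
  qed
qed

lemma split_full:
  assumes ft: "full_tree T" and u: "u \<in> leaves T"
  shows "full_tree (insert (u @ [True]) (insert (u @ [False]) T))" (is "full_tree ?T2")
proof -
  have uT: "u \<in> T" using u unfolding leaves_def by simp
  have nuc: "u @ [c] \<notin> T" for c using u unfolding leaves_def by (cases c) auto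
  have mem: "(v \<in> ?T2) = (v \<in> T \<or> (\<exists>c. v = u @ [c]))" for v
    by (auto simp: ex_bool_eq)
  show ?thesis unfolding full_tree_def
  proof (intro conjI allI impI ballI)
    show "[] \<in> ?T2" using ft_root[OF ft] by simp
  next
    fix v y assume vy: "v @ y \<in> ?T2"
    show "v \<in> ?T2"
    proof (cases "v @ y \<in> T")
      case True then show ?thesis using ft_closed[OF ft] by blast
    next
      case False
      then obtain c where c: "v @ y = u @ [c]" using vy mem by blast
      show ?thesis
      proof (cases y rule: rev_cases)
        case Nil then show ?thesis using vy by simp
      next
        case (snoc y' d)
        then have "v @ y' = u" using c by simp
        then show ?thesis using ft_closed[OF ft, of v y'] uT by simp
      qed
    qed
  next
    fix v assume v: "v \<in> ?T2"
    show "(v @ [True] \<in> ?T2) = (v @ [False] \<in> ?T2)"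
    proof (cases "v = u")
      case True then show ?thesis by simp
    next
      case vnu: False
      show ?thesis
      proof (cases "v \<in> T")
        case True
        have "v @ [c] \<noteq> u @ [d]" for c d using vnu by simp
        then show ?thesis using ft_child[OF ft True] by simp
      next
        case False
        then obtain c where c: "v = u @ [c]" using v mem by blast
        have "v @ [d] \<notin> T" for d using ft_closed[OF ft, of v "[d]"] False by blast
        moreover have "v @ [d] \<noteq> u @ [e]" for d e using c by simp
        ultimately show ?thesis by simp
      qed
    qed
  qed
qed

lemma split_leaves:
  assumes ft: "full_tree T" and u: "u \<in> leaves T"
  shows "leaves (insert (u @ [True]) (insert (u @ [False]) T)) =
         insert (u @ [True]) (insert (u @ [False]) (leaves T - {u}))"
proof -
  have nuc: "u @ [c] \<notin> T" for c using u unfolding leaves_def by (cases c) auto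
  have nucc: "u @ [c] @ [d] \<notin> T" for c d using nuc ft_closed[OF ft, of "u @ [c]" "[d]"] by auto
  have ne: "v @ [c] \<noteq> u @ [d]" if "v \<noteq> u" for v c d using that by simp
  show ?thesis unfolding leaves_def using nuc nucc ne
    by auto
qed

lemma split_bij:
  assumes ft: "full_tree T" and bij: "bij_betw f S (leaves T)" and a: "a \<in> S" and b: "b \<notin> S"
  shows "bij_betw (f(a := f a @ [False], b := f a @ [True])) (insert b S)
           (leaves (insert (f a @ [True]) (insert (f a @ [False]) T)))"
proof -
  define u where "u = f a"
  define F2 where "F2 = f(a := u @ [False], b := u @ [True])"
  have u: "u \<in> leaves T" using bij a unfolding u_def bij_betw_def by auto
  have nuc: "u @ [c] \<notin> leaves T" for c using u unfolding leaves_def by (cases c) auto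
  have ab: "a \<noteq> b" using a b by auto
  have "bij_betw f {a} {u}" unfolding u_def by simp
  then have "bij_betw f (S - {a}) (leaves T - {u})"
    using bij_betw_DiffI[OF bij] a u by blast
  then have 1: "bij_betw F2 (S - {a}) (leaves T - {u})"
    by (rule bij_betw_cong[THEN iffD1, rotated]) (use b in \<open>auto simp: F2_def\<close>)
  have 2: "bij_betw F2 ((S - {a}) \<union> {a}) ((leaves T - {u}) \<union> {F2 a})"
    using notIn_Un_bij_betw3[of a "S - {a}" F2 "leaves T - {u}"] 1 ab nuc by (simp add: F2_def)
  have 3: "bij_betw F2 ((S - {a}) \<union> {a} \<union> {b}) ((leaves T - {u}) \<union> {F2 a} \<union> {F2 b})"
    using notIn_Un_bij_betw3[of b "(S - {a}) \<union> {a}" F2 "(leaves T - {u}) \<union> {F2 a}"] 2 ab nuc b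
    by (simp add: F2_def)
  have e1: "(S - {a}) \<union> {a} \<union> {b} = insert b S" using a by auto
  have e2: "(leaves T - {u}) \<union> {F2 a} \<union> {F2 b} = insert (u @ [True]) (insert (u @ [False]) (leaves T - {u}))"
    using ab by (auto simp: F2_def)
  have "bij_betw F2 (insert b S) (leaves (insert (u @ [True]) (insert (u @ [False]) T)))"
    using 3 unfolding e1 e2 split_leaves[OF ft u] .
  then show ?thesis unfolding F2_def u_def .
qed



lemma infsum_split_ennreal:
  fixes h :: "'a \<Rightarrow> real"
  assumes "finite F" "\<And>c. h c \<ge> 0"
  shows "(\<Sum>\<^sub>\<infinity>c. ennreal (h c)) = ennreal (sum h F) + (\<Sum>\<^sub>\<infinity>c\<in>-F. ennreal (h c))"
proof -
  have "(\<Sum>\<^sub>\<infinity>c. ennreal (h c)) = (\<Sum>\<^sub>\<infinity>c\<in>F \<union> -F. ennreal (h c))" by simp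
  also have "\<dots> = (\<Sum>\<^sub>\<infinity>c\<in>F. ennreal (h c)) + (\<Sum>\<^sub>\<infinity>c\<in>-F. ennreal (h c))"
    by (rule infsum_Un_disjoint) (auto simp: nonneg_summable_on_complete)
  also have "(\<Sum>\<^sub>\<infinity>c\<in>F. ennreal (h c)) = ennreal (sum h F)"
    using assms by (simp add: sum_ennreal)
  finally show ?thesis .
qed

lemma cost_lt:
  fixes g g' :: "'a \<Rightarrow> real"
  assumes F: "finite F" and g: "\<And>c. g c \<ge> 0" and g': "\<And>c. g' c \<ge> 0"
    and lt: "sum g' F < sum g F" and le: "\<And>c. c \<notin> F \<Longrightarrow> g' c \<le> g c"
    and fin: "(\<Sum>\<^sub>\<infinity>c. ennreal (g c)) < \<infinity>"
  shows "(\<Sum>\<^sub>\<infinity>c. ennreal (g' c)) < (\<Sum>\<^sub>\<infinity>c. ennreal (g c))"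
proof -
  define B where "B = (\<Sum>\<^sub>\<infinity>c\<in>-F. ennreal (g c))"
  define B' where "B' = (\<Sum>\<^sub>\<infinity>c\<in>-F. ennreal (g' c))"
  have e: "(\<Sum>\<^sub>\<infinity>c. ennreal (g c)) = ennreal (sum g F) + B"
    unfolding B_def by (rule infsum_split_ennreal[OF F g])
  have e': "(\<Sum>\<^sub>\<infinity>c. ennreal (g' c)) = ennreal (sum g' F) + B'"
    unfolding B'_def by (rule infsum_split_ennreal[OF F g'])
  have "B' \<le> B" unfolding B_def B'_def
    by (rule infsum_mono) (auto intro: ennreal_leI le simp: nonneg_summable_on_complete)
  moreover have "B < \<infinity>" using fin e by (simp add: top_unique)
  moreover have "ennreal (sum g' F) < ennreal (sum g F)"
    using lt sum_nonneg[of F g'] g' by (intro ennreal_lessI) auto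
  ultimately have "ennreal (sum g' F) + B' < ennreal (sum g F) + B"
    by (metis add_mono_ennreal add_left_mono le_less_trans order_less_le ennreal_add_left_cancel_less add.commute)
  then show ?thesis using e e' by simp
qed



lemma tdgd_pos: "0 < q \<Longrightarrow> q < 1 \<Longrightarrow> tdgd q c > 0"
  by (cases c) (simp add: tdgd_def)

lemma opt_fin: "0 < q \<Longrightarrow> q < 1 \<Longrightarrow> optimal q T f \<Longrightarrow> exp_len q f < \<infinity>"
  unfolding optimal_def using prefix_code_g exp_len_g_finite le_less_trans by blast

lemma opt_contra:
  assumes q: "0 < q" "q < 1" and opt: "optimal q T f" and pc: "prefix_code T' f'"
    and F: "finite F"
    and lt: "(\<Sum>c\<in>F. tdgd q c * real (length (f' c))) < (\<Sum>c\<in>F. tdgd q c * real (length (f c)))"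
    and le: "\<And>c. c \<notin> F \<Longrightarrow> length (f' c) \<le> length (f c)"
  shows False
proof -
  have "exp_len q f' < exp_len q f"
    unfolding exp_len_def
  proof (rule cost_lt[OF F _ _ lt])
    show "0 \<le> tdgd q c * real (length (f c))" "0 \<le> tdgd q c * real (length (f' c))" for c
      using tdgd_pos[OF q, of c] by auto
    show "tdgd q c * real (length (f' c)) \<le> tdgd q c * real (length (f c))" if "c \<notin> F" for c
      using tdgd_pos[OF q, of c] le[OF that] by (auto intro: mult_left_mono)
    show "(\<Sum>\<^sub>\<infinity>c. ennreal (tdgd q c * real (length (f c)))) < \<infinity>"
      using opt_fin[OF q opt] unfolding exp_len_def .
  qed
  then show False using opt pc unfolding optimal_def by (meson leD)
qed

lemma alive:
  assumes q: "0 < q" "q < 1" and opt: "optimal q T f" and v: "v \<in> T"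
  shows "\<exists>c r. f c = v @ r"
  using v
proof (induct v rule: rev_induct)
  case Nil then show ?case by auto
next
  case (snoc x w)
  have pc: "prefix_code T f" using opt unfolding optimal_def by simp
  then have ft: "full_tree T" and bij: "bij_betw f UNIV (leaves T)" unfolding prefix_code_def by auto
  have wT: "w \<in> T" using ft_closed[OF ft snoc(2)] .
  obtain c r where c: "f c = w @ r" using snoc(1)[OF wT] by blast
  show ?case
  proof (rule ccontr)
    assume dead: "\<not> (\<exists>c r. f c = (w @ [x]) @ r)"
    have fl: "f c \<in> leaves T" using bij unfolding bij_betw_def by auto
    show False
    proof (cases r)
      case Nil
      then show False using fl c snoc(2) unfolding leaves_def by (cases x) auto
    next
      case (Cons y r')
      have "y \<noteq> x"
      proof
        assume "y = x"
        then have "f c = (w @ [x]) @ r'" using c Cons by simp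
        then show False using dead by blast
      qed
      then have y: "y = (\<not> x)" by auto
      have R: "{c \<in> UNIV. \<exists>r. f c = w @ [x] @ r} = {}" using dead by auto
      have bij2: "bij_betw (hmap w x \<circ> f) UNIV (leaves (collapse w x T))"
        using collapse_bij[OF ft snoc(2) bij] unfolding R by simp
      have pc2: "prefix_code (collapse w x T) (hmap w x \<circ> f)"
        unfolding prefix_code_def using bij2 collapse_full[OF ft snoc(2)] by simp
      have "f c = w @ [\<not> x] @ r'" using c Cons y by simp
      then have "length ((hmap w x \<circ> f) c) < length (f c)" using hmap_in[of w x r'] by simp
      then show False
        by (intro opt_contra[OF q opt pc2, of "{c}"]) (use tdgd_pos[OF q, of c] hmap_len in auto)
    qed
  qed
qed

lemma no_gap:
  assumes q: "0 < q" "q < 1" and opt: "optimal q T f" and p: "tdgd q a = tdgd q b"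
    and len: "length (f a) + 2 \<le> length (f b)"
  shows False
proof -
  have pc: "prefix_code T f" using opt unfolding optimal_def by simp
  then have ft: "full_tree T" and bij: "bij_betw f UNIV (leaves T)" unfolding prefix_code_def by auto
  have lv: "f c \<in> leaves T" for c using bij unfolding bij_betw_def by auto
  have lT: "f c \<in> T" for c using lv[of c] unfolding leaves_def by simp
  have injf: "inj f" using bij unfolding bij_betw_def by simp
  obtain w x where fb: "f b = w @ [x]" using len by (cases "f b" rule: rev_exhaust) auto
  have wx: "w @ [x] \<in> T" using lT[of b] fb by simp
  have sib: "w @ [\<not> x] \<in> T" using ft_sib[OF ft wx] .
  obtain c0 r where c0: "f c0 = (w @ [\<not> x]) @ r" using alive[OF q opt sib] by blast
  have ab: "a \<noteq> b" using len by auto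
  have c0b: "c0 \<noteq> b"
  proof
    assume "c0 = b"
    then have "w @ [x] = w @ [\<not> x] @ r" using c0 fb by simp
    then show False by simp
  qed
  have c0a: "c0 \<noteq> a" using c0 len fb by auto
  have R: "{c \<in> UNIV. \<exists>r. f c = w @ [x] @ r} = {b}"
  proof (intro equalityI subsetI)
    fix c assume "c \<in> {c \<in> UNIV. \<exists>r. f c = w @ [x] @ r}"
    then obtain r' where r': "f c = f b @ r'" using fb by auto
    then have "r' = []" using leaf_ext[OF ft lv[of b]] lT[of c] by simp
    then show "c \<in> {b}" using r' injf by (simp add: inj_eq)
  qed (use fb in auto)
  define f1 where "f1 = hmap w x \<circ> f"
  define C where "C = collapse w x T"
  have bij1: "bij_betw f1 (UNIV - {b}) (leaves C)"
    using collapse_bij[OF ft wx bij] unfolding R f1_def C_def .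
  have ft1: "full_tree C" unfolding C_def by (rule collapse_full[OF ft wx])
  have f1a: "f1 a = f a"
    unfolding f1_def using len fb by (auto intro!: hmap_out)
  have f1al: "f1 a \<in> leaves C" using bij1 ab unfolding bij_betw_def by auto
  define f2 where "f2 = f1(a := f1 a @ [False], b := f1 a @ [True])"
  define T2 where "T2 = insert (f1 a @ [True]) (insert (f1 a @ [False]) C)"
  have "bij_betw f2 (insert b (UNIV - {b})) (leaves T2)"
    unfolding f2_def T2_def by (rule split_bij[OF ft1 bij1]) (use ab in auto)
  moreover have "insert b (UNIV - {b}) = UNIV" by auto
  ultimately have bij2: "bij_betw f2 UNIV (leaves T2)" by simp
  have pc2: "prefix_code T2 f2"
    unfolding prefix_code_def T2_def using bij2 split_full[OF ft1 f1al] by (simp add: T2_def)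
  have l2a: "length (f2 a) = length (f a) + 1" and l2b: "length (f2 b) = length (f a) + 1"
    unfolding f2_def using ab f1a by auto
  have l2c0: "length (f2 c0) + 1 = length (f c0)"
    unfolding f2_def f1_def using c0a c0b c0 hmap_in[of w x r] by simp
  have l2o: "length (f2 c) \<le> length (f c)" if "c \<notin> {a, b, c0}" for c
    unfolding f2_def f1_def using that hmap_len by simp
  show False
  proof (rule opt_contra[OF q opt pc2, of "{a, b, c0}"])
    have pa: "tdgd q a > 0" "tdgd q c0 > 0" using tdgd_pos[OF q] by auto
    have "real (length (f2 c0)) + 1 = real (length (f c0))" using l2c0 by linarith
    then have "tdgd q c0 * real (length (f2 c0)) < tdgd q c0 * real (length (f c0))"
      using pa by simp
    moreover have "tdgd q a * real (length (f2 a)) + tdgd q b * real (length (f2 b))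
          \<le> tdgd q a * real (length (f a)) + tdgd q b * real (length (f b))"
    proof -
      have "real (length (f2 a)) + real (length (f2 b)) \<le> real (length (f a)) + real (length (f b))"
        using l2a l2b len by simp
      then show ?thesis using p pa by (simp add: distrib_left[symmetric])
    qed
    ultimately show "(\<Sum>c\<in>{a, b, c0}. tdgd q c * real (length (f2 c))) < (\<Sum>c\<in>{a, b, c0}. tdgd q c * real (length (f c)))"
      using ab c0a c0b by simp
  qed (use l2o in auto)
qed

theorem lemma1:
  fixes q :: real and T :: "bool list set" and f :: "nat \<times> nat \<Rightarrow> bool list"
  assumes "0 < q" and "q < 1" and "optimal q T f"
  shows "\<forall>s. \<exists>d0. \<forall>i j. i + j = s \<longrightarrow> length (f (i, j)) \<in> {d0, d0 + 1}"
proof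
  fix s
  define A where "A = {p :: nat \<times> nat. fst p + snd p = s}"
  have finA: "finite A" by (rule finite_subset[of _ "{..s} \<times> {..s}"]) (auto simp: A_def)
  have neA: "A \<noteq> {}" unfolding A_def by (metis (mono_tags) add_0_right empty_iff fst_conv mem_Collect_eq snd_conv)
  define d0 where "d0 = Min ((\<lambda>p. length (f p)) ` A)"
  have "d0 \<in> (\<lambda>p. length (f p)) ` A" unfolding d0_def using finA neA by (intro Min_in) auto
  then obtain a where aA: "a \<in> A" and la: "length (f a) = d0" by auto
  show "\<exists>d0. \<forall>i j. i + j = s \<longrightarrow> length (f (i, j)) \<in> {d0, d0 + 1}"
  proof (intro exI allI impI)
    fix i j assume ij: "i + j = s"
    then have "(i, j) \<in> A" by (simp add: A_def)
    then have ge: "d0 \<le> length (f (i, j))" unfolding d0_def using finA by simp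
    have p: "tdgd q a = tdgd q (i, j)" using aA ij by (cases a) (simp add: A_def tdgd_def)
    have "\<not> length (f a) + 2 \<le> length (f (i, j))"
      using no_gap[OF assms p] by blast
    then show "length (f (i, j)) \<in> {d0, d0 + 1}" using ge la by auto
  qed
qed


end
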